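(* Let $Y=[0,1)$ with the topology whose open sets are exactly the sets $[0,\lambda)$ for $0\le\lambda\le1$, and let $L=\mathcal{O}(Y)$. Let $\mathfrak{I}=([0,1],\wedge,\vee,\neg,0,1)$ be regarded as a relational structure of type $(2,2,1,0,0)$. Then the type-2 fuzzy truth value algebra $\mathbb{M}$ is isomorphic to the convolution algebra $L^{\mathfrak{I}}$, and is isomorphic to the complex algebra $\hat{\mathfrak{I}}^+$ of the constant relational étalé $\hat{\mathfrak{I}}$ in the topos of étalé spaces over $Y$.
   Context: Let $\mathbb{I}=[0,1]$ with its usual order, $\wedge=\min$, $\vee=\max$, $\neg x=1-x$. The type-2 fuzzy truth value algebra is $\mathbb{M}=(\mathbb{I}^{\mathbb{I}},\sqcap,\sqcup,\neg,\underline{0},\underline{1})$ where, for $\alpha,\beta:\mathbb{I}\to\mathbb{I}$: $(\alpha\sqcap\beta)(x)=\bigvee\{\alpha(y)\wedge\beta(z)\mid y\wedge z=x\}$, $(\alpha\sqcup\beta)(x)=\bigvee\{\alpha(y)\wedge\beta(z)\mid y\vee z=x\}$, $(\neg\alpha)(x)=\bigvee\{\alpha(y)\mid \neg y=x\}$, $\underline{0}(x)=1$ if $x=0$ and $0$ otherwise, $\underline{1}(x)=1$ if $x=1$ and $0$ otherwise. As a relational structure, $\mathfrak{I}$ has ternary relations $\{(x,y,z)\mid x\wedge y=z\}$, $\{(x,y,z)\mid x\vee y=z\}$, binary relation $\{(x,y)\mid \neg x=y\}$, and unary relations $\{0\},\{1\}$. A relational structure $\mathfrak{X}=(X,(R_j)_J)$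 of type $\tau:J\to\mathbb{N}$, $j\mapsto n_j$, has $R_j\subseteq X^{n_j+1}$. For a complete lattice $L$, the convolution algebra $L^{\mathfrak{X}}$ has underlying set $L^X$ and operations $f_j(\alpha_1,\ldots,\alpha_{n_j})(x)=\bigvee\{\alpha_1(x_1)\wedge\cdots\wedge\alpha_{n_j}(x_{n_j})\mid (x_1,\ldots,x_{n_j},x)\in R_j\}$. An étalé space over $Y$ is a pair $(E,\pi)$ with $\pi:E\to Y$ a local homeomorphism; subobjects of $(E,\pi)$ correspond to open subsets of $E$. The constant étalé $\hat{X}$ is $X\times Y$ ($X$ discrete) with projection to $Y$; $\hat{X}^k$ is identified with $X^k\times Y$ and $\hat{R}=R\times Y$. The constant relational étalé is $\hat{\mathfrak{X}}=(\hat{X},(\hat{R}_j)_J)$, and its complex algebra $\hat{\mathfrak{X}}^+$ has underlying set the subobjects (open subsets) of $\hat{X}$ and operations given by étalé relational image: $(x,y)\in\hat{R}_j(A_1,\ldots,A_{n_j})$ iff there are $x_1,\ldots,x_{n_j}$ with $(x_1,\ldots,x_{n_j},x)\in R_j$ and $(x_i,y)\in A_i$ for all $i$. *)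

theory Defs
  imports "HOL-Analysis.Analysis"
begin

record 'a alg22100 =
  acar :: "'a set"
  ameet :: "'a \<Rightarrow> 'a \<Rightarrow> 'a"
  ajoin :: "'a \<Rightarrow> 'a \<Rightarrow> 'a"
  aneg :: "'a \<Rightarrow> 'a"
  azero :: "'a"
  aone :: "'a"

definition alg_iso :: "'a alg22100 \<Rightarrow> 'b alg22100 \<Rightarrow> ('a \<Rightarrow> 'b) \<Rightarrow> bool" where
  "alg_iso A B h \<longleftrightarrow>
     bij_betw h (acar A) (acar B) \<and>
     (\<forall>a\<in>acar A. \<forall>b\<in>acar A. h (ameet A a b) = ameet B (h a) (h b)) \<and>
     (\<forall>a\<in>acar A. \<forall>b\<in>acar A. h (ajoin A a b) = ajoin B (h a) (h b)) \<and>
     (\<forall>a\<in>acar A. h (aneg A a) = aneg B (h a)) \<and>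
     h (azero A) = azero B \<and> h (aone A) = aone B"

definition Iset :: "real set" where "Iset = {0..1}"

definition Rmeet :: "(real \<times> real \<times> real) set" where
  "Rmeet = {(x,y,z). x \<in> Iset \<and> y \<in> Iset \<and> z \<in> Iset \<and> min x y = z}"
definition Rjoin :: "(real \<times> real \<times> real) set" where
  "Rjoin = {(x,y,z). x \<in> Iset \<and> y \<in> Iset \<and> z \<in> Iset \<and> max x y = z}"
definition Rneg :: "(real \<times> real) set" where
  "Rneg = {(x,y). x \<in> Iset \<and> y \<in> Iset \<and> 1 - x = y}"
definition Rzero :: "real set" where "Rzero = {0}"
definition Rone :: "real set" where "Rone = {1}"

definition Malg :: "(real \<Rightarrow> real) alg22100" where
  "Malg = \<lparr> acar = Iset \<rightarrow>\<^sub>E Iset,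
     ameet = (\<lambda>\<alpha> \<beta>. restrict (\<lambda>x. Sup {min (\<alpha> y) (\<beta> z) | y z. y \<in> Iset \<and> z \<in> Iset \<and> min y z = x}) Iset),
     ajoin = (\<lambda>\<alpha> \<beta>. restrict (\<lambda>x. Sup {min (\<alpha> y) (\<beta> z) | y z. y \<in> Iset \<and> z \<in> Iset \<and> max y z = x}) Iset),
     aneg = (\<lambda>\<alpha>. restrict (\<lambda>x. Sup {\<alpha> y | y. y \<in> Iset \<and> 1 - y = x}) Iset),
     azero = restrict (\<lambda>x. if x = 0 then 1 else 0) Iset,
     aone = restrict (\<lambda>x. if x = 1 then 1 else 0) Iset \<rparr>"

definition Yset :: "real set" where "Yset = {0..<1}"

definition Ytop :: "real topology" where
  "Ytop = topology (\<lambda>U. \<exists>l. 0 \<le> l \<and> l \<le> 1 \<and> U = {0..<l})"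

definition Lset :: "real set set" where "Lset = {U. openin Ytop U}"

definition conv2 :: "(real \<times> real \<times> real) set \<Rightarrow> (real \<Rightarrow> real set) \<Rightarrow> (real \<Rightarrow> real set) \<Rightarrow> real \<Rightarrow> real set" where
  "conv2 R \<alpha> \<beta> = restrict (\<lambda>x. \<Union> {\<alpha> y \<inter> \<beta> z | y z. (y, z, x) \<in> R}) Iset"
definition conv1 :: "(real \<times> real) set \<Rightarrow> (real \<Rightarrow> real set) \<Rightarrow> real \<Rightarrow> real set" where
  "conv1 R \<alpha> = restrict (\<lambda>x. \<Union> {\<alpha> y | y. (y, x) \<in> R}) Iset"
definition conv0 :: "real set \<Rightarrow> real \<Rightarrow> real set" where
  "conv0 R = restrict (\<lambda>x. if x \<in> R then Yset else {}) Iset"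

definition LIalg :: "(real \<Rightarrow> real set) alg22100" where
  "LIalg = \<lparr> acar = Iset \<rightarrow>\<^sub>E Lset,
     ameet = conv2 Rmeet, ajoin = conv2 Rjoin, aneg = conv1 Rneg,
     azero = conv0 Rzero, aone = conv0 Rone \<rparr>"

text \<open>The constant etale is I x Y with I discrete; its subobjects are its open subsets.\<close>

definition Etop :: "(real \<times> real) topology" where
  "Etop = prod_topology (discrete_topology Iset) Ytop"

definition img2 :: "(real \<times> real \<times> real) set \<Rightarrow> (real \<times> real) set \<Rightarrow> (real \<times> real) set \<Rightarrow> (real \<times> real) set" where
  "img2 R A B = {(x, y). \<exists>x1 x2. (x1, x2, x) \<in> R \<and> (x1, y) \<in> A \<and> (x2, y) \<in> B}"
definition img1 :: "(real \<times> real) set \<Rightarrow> (real \<times> real) set \<Rightarrow> (real \<times> real) set" where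
  "img1 R A = {(x, y). \<exists>x1. (x1, x) \<in> R \<and> (x1, y) \<in> A}"
definition img0 :: "real set \<Rightarrow> (real \<times> real) set" where
  "img0 R = R \<times> Yset"

definition CAalg :: "(real \<times> real) set alg22100" where
  "CAalg = \<lparr> acar = {A. openin Etop A},
     ameet = img2 Rmeet, ajoin = img2 Rjoin, aneg = img1 Rneg,
     azero = img0 Rzero, aone = img0 Rone \<rparr>"

end

theory Submission
  imports Defs
begin

lemma Union_Ico_Sup:
  fixes S :: "real set"
  assumes "S \<noteq> {}" "bdd_above S"
  shows "\<Union> ((\<lambda>s. {0..<s}) ` S) = {0..<Sup S}"
proof
  show "\<Union> ((\<lambda>s. {0..<s}) ` S) \<subseteq> {0..<Sup S}"
    using assms by (auto intro: less_le_trans[OF _ cSup_upper])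
  show "{0..<Sup S} \<subseteq> \<Union> ((\<lambda>s. {0..<s}) ` S)"
  proof
    fix x assume "x \<in> {0..<Sup S}"
    then obtain s where "s \<in> S" "x < s" using less_cSup_iff[OF assms] by auto
    then show "x \<in> \<Union> ((\<lambda>s. {0..<s}) ` S)" using \<open>x \<in> {0..<Sup S}\<close> by auto
  qed
qed

lemma Ico_inj:
  fixes a b :: real
  assumes "0 \<le> a" "0 \<le> b" "{0..<a} = {0..<b}"
  shows "a = b"
proof (rule ccontr)
  assume "a \<noteq> b"
  then consider "a < b" | "b < a" by linarith
  then show False
  proof cases
    case 1 then have "a \<in> {0..<b}" using assms by auto
    then show False using assms(3) by auto
  next
    case 2 then have "b \<in> {0..<a}" using assms by auto
    then show False using assms(3) by auto
  qed
qed

definition Lpred :: "real set \<Rightarrow> bool" where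
  "Lpred U \<longleftrightarrow> (\<exists>l. 0 \<le> l \<and> l \<le> 1 \<and> U = {0..<l})"

lemma istop_L: "istopology Lpred"
  unfolding istopology_def
proof (intro conjI allI impI)
  fix S T assume "Lpred S" "Lpred T"
  then obtain a b where ab: "0 \<le> a" "a \<le> 1" "S = {0..<a}" "0 \<le> b" "b \<le> 1" "T = {0..<b}"
    unfolding Lpred_def by blast
  then have "S \<inter> T = {0..<min a b}" by auto
  then show "Lpred (S \<inter> T)" unfolding Lpred_def using ab
    by (intro exI[of _ "min a b"]) auto
next
  fix K assume K: "\<forall>k\<in>K. Lpred k"
  define Ls where "Ls = {l. 0 \<le> l \<and> l \<le> (1::real) \<and> {0..<l} \<in> K}"
  have KL: "K = (\<lambda>s. {0..<s}) ` Ls"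
    using K unfolding Ls_def Lpred_def by auto
  show "Lpred (\<Union>K)"
  proof (cases "Ls = {}")
    case True
    then show ?thesis using KL unfolding Lpred_def by (intro exI[of _ 0]) auto
  next
    case False
    have bdd: "bdd_above Ls" unfolding Ls_def by (intro bdd_aboveI[of _ 1]) auto
    have "\<Union>K = {0..<Sup Ls}" using KL Union_Ico_Sup[OF False bdd] by simp
    moreover have "0 \<le> Sup Ls"
      using False bdd by (metis Ls_def all_not_in_conv cSup_upper mem_Collect_eq order_trans)
    moreover have "Sup Ls \<le> 1" using False by (intro cSup_least) (auto simp: Ls_def)
    ultimately show ?thesis unfolding Lpred_def by blast
  qed
qed

lemma openin_Ytop: "openin Ytop U \<longleftrightarrow> (\<exists>l. 0 \<le> l \<and> l \<le> 1 \<and> U = {0..<l})"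
proof -
  have "Ytop = topology Lpred" unfolding Ytop_def Lpred_def by simp
  then have "openin Ytop = Lpred" using istop_L topology_inverse' by metis
  then show ?thesis by (simp add: Lpred_def)
qed

lemma Lset_char: "U \<in> Lset \<longleftrightarrow> (\<exists>l. 0 \<le> l \<and> l \<le> 1 \<and> U = {0..<l})"
  unfolding Lset_def using openin_Ytop by simp

lemma topspace_Ytop: "topspace Ytop = Yset"
proof -
  have "topspace Ytop = \<Union> {U. openin Ytop U}" by (simp add: topspace_def)
  also have "\<dots> = Yset"
  proof
    show "\<Union> {U. openin Ytop U} \<subseteq> Yset" unfolding openin_Ytop Yset_def by auto
    show "Yset \<subseteq> \<Union> {U. openin Ytop U}" unfolding openin_Ytop Yset_def
      by (auto intro!: exI[of _ "{0..<1}"] exI[of _ "1::real"])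
  qed
  finally show ?thesis .
qed


lemma alg_iso_comp:
  assumes "alg_iso A B h" "alg_iso B C g"
  shows "alg_iso A C (g \<circ> h)"
proof -
  have hin: "\<And>a. a \<in> acar A \<Longrightarrow> h a \<in> acar B"
    using assms(1) unfolding alg_iso_def by (meson bij_betw_apply)
  show ?thesis using assms unfolding alg_iso_def
    by (auto simp: hin intro: bij_betw_trans)
qed

definition hM :: "(real \<Rightarrow> real) \<Rightarrow> real \<Rightarrow> real set" where
  "hM \<alpha> = restrict (\<lambda>x. {0..<\<alpha> x}) Iset"

definition iM :: "(real \<Rightarrow> real set) \<Rightarrow> real \<Rightarrow> real" where
  "iM f = restrict (\<lambda>x. SOME l. 0 \<le> l \<and> l \<le> 1 \<and> f x = {0..<l}) Iset"

lemma Iset_iff: "x \<in> Iset \<longleftrightarrow> 0 \<le> x \<and> x \<le> (1::real)"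
  by (simp add: Iset_def)

lemma hM_in: assumes "a \<in> Iset \<rightarrow>\<^sub>E Iset" shows "hM a \<in> Iset \<rightarrow>\<^sub>E Lset"
proof -
  have "\<And>x. x \<in> Iset \<Longrightarrow> {0..<a x} \<in> Lset"
  proof -
    fix x assume x: "x \<in> Iset"
    then have "a x \<in> Iset" using PiE_mem[OF assms] by blast
    then show "{0..<a x} \<in> Lset" unfolding Lset_char Iset_iff by blast
  qed
  then show ?thesis by (simp add: hM_def)
qed

lemma hM_bij: "bij_betw hM (Iset \<rightarrow>\<^sub>E Iset) (Iset \<rightarrow>\<^sub>E Lset)"
proof (rule bij_betwI[where g = iM])
  show "hM \<in> (Iset \<rightarrow>\<^sub>E Iset) \<rightarrow> (Iset \<rightarrow>\<^sub>E Lset)"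
    using hM_in by blast
  have sm: "\<And>f x. f \<in> Iset \<rightarrow>\<^sub>E Lset \<Longrightarrow> x \<in> Iset \<Longrightarrow>
     0 \<le> iM f x \<and> iM f x \<le> 1 \<and> f x = {0..<iM f x}"
  proof -
    fix f x assume "f \<in> Iset \<rightarrow>\<^sub>E Lset" "x \<in> Iset"
    then have "\<exists>l. 0 \<le> l \<and> l \<le> 1 \<and> f x = {0..<l}" using Lset_char by auto
    then have "0 \<le> (SOME l. 0 \<le> l \<and> l \<le> 1 \<and> f x = {0..<l}) \<and>
       (SOME l. 0 \<le> l \<and> l \<le> 1 \<and> f x = {0..<l}) \<le> 1 \<and>
       f x = {0..<(SOME l. 0 \<le> l \<and> l \<le> 1 \<and> f x = {0..<l})}" by (rule someI_ex)
    then show "0 \<le> iM f x \<and> iM f x \<le> 1 \<and> f x = {0..<iM f x}"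
      unfolding iM_def using \<open>x \<in> Iset\<close> by simp
  qed
  show "iM \<in> (Iset \<rightarrow>\<^sub>E Lset) \<rightarrow> (Iset \<rightarrow>\<^sub>E Iset)"
    using sm by (auto simp: iM_def Iset_iff)
  show "iM (hM a) = a" if "a \<in> Iset \<rightarrow>\<^sub>E Iset" for a
  proof (rule PiE_ext[OF _ that])
    have hin: "hM a \<in> Iset \<rightarrow>\<^sub>E Lset"
      using that by (rule hM_in)
    show "iM (hM a) \<in> Iset \<rightarrow>\<^sub>E Iset"
      using sm[OF hin] by (auto simp: iM_def Iset_iff)
    fix x assume x: "x \<in> Iset"
    have "hM a x = {0..<iM (hM a) x}" "0 \<le> iM (hM a) x" using sm[OF hin x] by auto
    moreover have "hM a x = {0..<a x}" "0 \<le> a x" using x that by (auto simp: hM_def Iset_iff)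
    ultimately show "iM (hM a) x = a x" using Ico_inj by metis
  qed
  show "hM (iM b) = b" if "b \<in> Iset \<rightarrow>\<^sub>E Lset" for b
  proof (rule PiE_ext[OF _ that])
    have "iM b \<in> Iset \<rightarrow>\<^sub>E Iset"
      using sm[OF that] by (auto simp: iM_def Iset_iff)
    then show "hM (iM b) \<in> Iset \<rightarrow>\<^sub>E Lset" by (rule hM_in)
    fix x assume x: "x \<in> Iset"
    show "hM (iM b) x = b x" using sm[OF that x] x by (simp add: hM_def)
  qed
qed

lemma conv_key:
  fixes \<alpha> \<beta> :: "real \<Rightarrow> real" and op :: "real \<Rightarrow> real \<Rightarrow> real"
  assumes a: "\<alpha> \<in> Iset \<rightarrow>\<^sub>E Iset" and b: "\<beta> \<in> Iset \<rightarrow>\<^sub>E Iset" and x: "x \<in> Iset"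
    and idem: "op x x = x"
  shows "\<Union> {hM \<alpha> y \<inter> hM \<beta> z | y z. y \<in> Iset \<and> z \<in> Iset \<and> x \<in> Iset \<and> op y z = x}
       = {0..<Sup {min (\<alpha> y) (\<beta> z) | y z. y \<in> Iset \<and> z \<in> Iset \<and> op y z = x}}"
proof -
  define S where "S = {min (\<alpha> y) (\<beta> z) | y z. y \<in> Iset \<and> z \<in> Iset \<and> op y z = x}"
  have ne: "S \<noteq> {}" using x idem unfolding S_def by blast
  have "s \<le> 1" if "s \<in> S" for s
  proof -
    obtain y z where "s = min (\<alpha> y) (\<beta> z)" "y \<in> Iset" using \<open>s \<in> S\<close> unfolding S_def by blast
    moreover have "\<alpha> y \<in> Iset" using PiE_mem[OF a \<open>y \<in> Iset\<close>] .
    ultimately show ?thesis by (simp add: Iset_iff min.coboundedI1)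
  qed
  then have bdd: "bdd_above S" by (intro bdd_aboveI[of _ 1]) 
  have eq: "hM \<alpha> y \<inter> hM \<beta> z = {0..<min (\<alpha> y) (\<beta> z)}" if "y \<in> Iset" "z \<in> Iset" for y z
    using that by (auto simp: hM_def)
  have "{hM \<alpha> y \<inter> hM \<beta> z | y z. y \<in> Iset \<and> z \<in> Iset \<and> x \<in> Iset \<and> op y z = x}
        = {{0..<min (\<alpha> y) (\<beta> z)} | y z. y \<in> Iset \<and> z \<in> Iset \<and> op y z = x}"
    using x eq by metis
  also have "\<dots> = (\<lambda>s. {0..<s}) ` S"
    unfolding S_def by blast
  finally show ?thesis using Union_Ico_Sup[OF ne bdd] unfolding S_def by simp
qed

lemma iso1: "alg_iso Malg LIalg hM"
  unfolding alg_iso_def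
proof (intro conjI ballI)
  show "bij_betw hM (acar Malg) (acar LIalg)" using hM_bij by (simp add: Malg_def LIalg_def)
next
  fix a b assume "a \<in> acar Malg" "b \<in> acar Malg"
  then have a: "a \<in> Iset \<rightarrow>\<^sub>E Iset" and b: "b \<in> Iset \<rightarrow>\<^sub>E Iset" by (auto simp: Malg_def)
  show "hM (ameet Malg a b) = ameet LIalg (hM a) (hM b)"
  proof
    fix x show "hM (ameet Malg a b) x = ameet LIalg (hM a) (hM b) x"
    proof (cases "x \<in> Iset")
      case True
      have "(\<Union> {hM a y \<inter> hM b z | y z. (y, z, x) \<in> Rmeet}) = 
        \<Union> {hM a y \<inter> hM b z | y z. y \<in> Iset \<and> z \<in> Iset \<and> x \<in> Iset \<and> min y z = x}"
        by (simp add: Rmeet_def)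
      also have "\<dots> = {0..<Sup {min (a y) (b z) | y z. y \<in> Iset \<and> z \<in> Iset \<and> min y z = x}}"
        by (rule conv_key[OF a b True]) simp
      finally show ?thesis using True by (simp add: Malg_def LIalg_def conv2_def hM_def)
    qed (simp add: Malg_def LIalg_def conv2_def hM_def)
  qed
  show "hM (ajoin Malg a b) = ajoin LIalg (hM a) (hM b)"
  proof
    fix x show "hM (ajoin Malg a b) x = ajoin LIalg (hM a) (hM b) x"
    proof (cases "x \<in> Iset")
      case True
      have "(\<Union> {hM a y \<inter> hM b z | y z. (y, z, x) \<in> Rjoin}) = 
        \<Union> {hM a y \<inter> hM b z | y z. y \<in> Iset \<and> z \<in> Iset \<and> x \<in> Iset \<and> max y z = x}"
        by (simp add: Rjoin_def)
      also have "\<dots> = {0..<Sup {min (a y) (b z) | y z. y \<in> Iset \<and> z \<in> Iset \<and> max y z = x}}"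
        by (rule conv_key[OF a b True]) simp
      finally show ?thesis using True by (simp add: Malg_def LIalg_def conv2_def hM_def)
    qed (simp add: Malg_def LIalg_def conv2_def hM_def)
  qed
next
  fix a assume "a \<in> acar Malg"
  then have a: "a \<in> Iset \<rightarrow>\<^sub>E Iset" by (auto simp: Malg_def)
  show "hM (aneg Malg a) = aneg LIalg (hM a)"
  proof
    fix x show "hM (aneg Malg a) x = aneg LIalg (hM a) x"
    proof (cases "x \<in> Iset")
      case True
      then have t: "1 - x \<in> Iset" by (simp add: Iset_iff)
      have "{a y | y. y \<in> Iset \<and> 1 - y = x} = {a (1 - x)}" using t by auto
      moreover have "{hM a y | y. (y, x) \<in> Rneg} = {hM a (1 - x)}" using t True
        by (auto simp: Rneg_def)
      ultimately show ?thesis using True t by (simp add: Malg_def LIalg_def conv1_def hM_def)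
    qed (simp add: Malg_def LIalg_def conv1_def hM_def)
  qed
next
  show "hM (azero Malg) = azero LIalg"
    by (rule ext) (auto simp: Malg_def LIalg_def conv0_def hM_def Rzero_def Yset_def Iset_iff)
  show "hM (aone Malg) = aone LIalg"
    by (rule ext) (auto simp: Malg_def LIalg_def conv0_def hM_def Rone_def Yset_def Iset_iff)
qed


lemma openin_Etop: "openin Etop A \<longleftrightarrow> (\<exists>f \<in> Iset \<rightarrow>\<^sub>E Lset. A = Sigma Iset f)"
proof
  assume A: "openin Etop A"
  define f where "f = restrict (\<lambda>x. {y. (x, y) \<in> A}) Iset"
  have sub: "A \<subseteq> Iset \<times> Yset"
    using openin_subset[OF A] by (simp add: Etop_def topspace_Ytop)
  have "f x \<in> Lset" if x: "x \<in> Iset" for x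
  proof -
    have "openin Ytop {y. (x, y) \<in> A}"
    proof (subst openin_subopen, intro ballI)
      fix y assume "y \<in> {y. (x, y) \<in> A}"
      then obtain U V where "openin (discrete_topology Iset) U" "openin Ytop V" "x \<in> U" "y \<in> V"
        "U \<times> V \<subseteq> A"
        using A unfolding Etop_def openin_prod_topology_alt by blast
      then show "\<exists>T. openin Ytop T \<and> y \<in> T \<and> T \<subseteq> {y. (x, y) \<in> A}" by blast
    qed
    then show ?thesis using x by (simp add: f_def Lset_def)
  qed
  then have "f \<in> Iset \<rightarrow>\<^sub>E Lset" by (simp add: f_def)
  moreover have "A = Sigma Iset f" using sub by (auto simp: f_def)
  ultimately show "\<exists>f \<in> Iset \<rightarrow>\<^sub>E Lset. A = Sigma Iset f" by blast
next
  assume "\<exists>f \<in> Iset \<rightarrow>\<^sub>E Lset. A = Sigma Iset f"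
  then obtain f where f: "f \<in> Iset \<rightarrow>\<^sub>E Lset" and A: "A = Sigma Iset f" by blast
  show "openin Etop A" unfolding Etop_def openin_prod_topology_alt
  proof (intro allI impI)
    fix x y assume xy: "(x, y) \<in> A"
    then have x: "x \<in> Iset" using A by auto
    have "openin Ytop (f x)" using PiE_mem[OF f x] by (simp add: Lset_def)
    then show "\<exists>U V. openin (discrete_topology Iset) U \<and> openin Ytop V \<and> x \<in> U \<and> y \<in> V \<and> U \<times> V \<subseteq> A"
      using xy x A by (intro exI[of _ "{x}"] exI[of _ "f x"]) auto
  qed
qed

definition FS :: "(real \<Rightarrow> real set) \<Rightarrow> (real \<times> real) set" where
  "FS f = Sigma Iset f"

lemma FS_bij: "bij_betw FS (Iset \<rightarrow>\<^sub>E Lset) {A. openin Etop A}"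
proof -
  have "inj_on FS (Iset \<rightarrow>\<^sub>E Lset)"
  proof (rule inj_onI)
    fix f g assume f: "f \<in> Iset \<rightarrow>\<^sub>E Lset" and g: "g \<in> Iset \<rightarrow>\<^sub>E Lset" and e: "FS f = FS g"
    show "f = g"
    proof (rule PiE_ext[OF f g])
      fix x assume "x \<in> Iset"
      then show "f x = g x" using e unfolding FS_def by blast
    qed
  qed
  moreover have "FS ` (Iset \<rightarrow>\<^sub>E Lset) = {A. openin Etop A}"
    unfolding openin_Etop FS_def by auto
  ultimately show ?thesis by (simp add: bij_betw_def)
qed

lemma iso2: "alg_iso LIalg CAalg FS"
  unfolding alg_iso_def
proof (intro conjI ballI)
  show "bij_betw FS (acar LIalg) (acar CAalg)" using FS_bij by (simp add: LIalg_def CAalg_def)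
  fix a b
  show "FS (ameet LIalg a b) = ameet CAalg (FS a) (FS b)"
    by (auto simp: LIalg_def CAalg_def FS_def conv2_def img2_def Rmeet_def; blast)
  show "FS (ajoin LIalg a b) = ajoin CAalg (FS a) (FS b)"
    by (auto simp: LIalg_def CAalg_def FS_def conv2_def img2_def Rjoin_def; blast)
next
  fix a
  show "FS (aneg LIalg a) = aneg CAalg (FS a)"
    by (auto simp: LIalg_def CAalg_def FS_def conv1_def img1_def Rneg_def)
next
  show "FS (azero LIalg) = azero CAalg"
    by (auto simp: LIalg_def CAalg_def FS_def conv0_def img0_def Rzero_def Iset_iff split: if_splits)
  show "FS (aone LIalg) = aone CAalg"
    by (auto simp: LIalg_def CAalg_def FS_def conv0_def img0_def Rone_def Iset_iff split: if_splits)
qed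

theorem corollary2:
  shows "(\<exists>h. alg_iso Malg LIalg h) \<and> (\<exists>g. alg_iso Malg CAalg g)"
  using iso1 alg_iso_comp[OF iso1 iso2] by blast

end
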